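(* Let $G$ be a finite group and let $S,S'$ be two partial rainbows on $G$ with $\langle S\rangle=\langle S'\rangle$. Then for each arrow $(K,H)\in S$ there exists $g\in G$ such that $(gKg^{-1},gHg^{-1})\in S'$.
   Context: For a finite group $G$, an arrow is a pair $(K,H)$ of subgroups with $K\leqslant H$; it is an identity arrow if $K=H$. A $G$-transfer system is a set of arrows containing all identity arrows and closed under composition ($(A,B),(B,C)\Rightarrow(A,C)$), conjugation ($(A,B)\Rightarrow(gAg^{-1},gBg^{-1})$ for $g\in G$) and restriction ($(A,B)$ and $L\leqslant B\Rightarrow(A\cap L,L)$). For a set $S$ of non-identity arrows, $\langle S\rangle$ is the smallest transfer system containing $S$. For a subgroup $K$, $P(K)$ denotes the sum of the exponents in the prime factorization of $|K|$. A rainbow on $\mathbb{N}$ is a finite set of pairs $\{(a_i,b_i)\}_{0\leqslant i\leqslant k}$ of natural numbers such that $i<j$ implies $a_i<a_j<b_j<b_i$. A partial rainbow on $G$ is a set $S$ of non-identity arrows such that (1) the set $\{(P(K),P(H)) : (K,H)\in S\}$ is a rainbow, and (2) for any $g\in G$ and $(K,H)\in S$, if $(gKg^{-1},gHg^{-1})\neq(K,H)$ then $(gKg^{-1},gHg^{-1})\notin S$. *)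

theory Defs
  imports "HOL-Algebra.Group" "HOL-Computational_Algebra.Primes"
begin

definition conjg :: "('a, 'b) monoid_scheme \<Rightarrow> 'a \<Rightarrow> 'a set \<Rightarrow> 'a set" where
  "conjg G g K = {g \<otimes>\<^bsub>G\<^esub> k \<otimes>\<^bsub>G\<^esub> inv\<^bsub>G\<^esub> g | k. k \<in> K}"

definition is_arrow :: "('a, 'b) monoid_scheme \<Rightarrow> 'a set \<times> 'a set \<Rightarrow> bool" where
  "is_arrow G a \<longleftrightarrow> subgroup (fst a) G \<and> subgroup (snd a) G \<and> fst a \<subseteq> snd a"

definition transfer_system :: "('a, 'b) monoid_scheme \<Rightarrow> ('a set \<times> 'a set) set \<Rightarrow> bool" where
  "transfer_system G T \<longleftrightarrow>
     (\<forall>a\<in>T. is_arrow G a) \<and>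
     (\<forall>H. subgroup H G \<longrightarrow> (H, H) \<in> T) \<and>
     (\<forall>A B C. (A, B) \<in> T \<and> (B, C) \<in> T \<longrightarrow> (A, C) \<in> T) \<and>
     (\<forall>A B g. (A, B) \<in> T \<and> g \<in> carrier G \<longrightarrow> (conjg G g A, conjg G g B) \<in> T) \<and>
     (\<forall>A B L. (A, B) \<in> T \<and> subgroup L G \<and> L \<subseteq> B \<longrightarrow> (A \<inter> L, L) \<in> T)"

definition generated_ts :: "('a, 'b) monoid_scheme \<Rightarrow> ('a set \<times> 'a set) set \<Rightarrow> ('a set \<times> 'a set) set" where
  "generated_ts G S = \<Inter> {T. transfer_system G T \<and> S \<subseteq> T}"

definition Pexp :: "'a set \<Rightarrow> nat" where
  "Pexp K = size (prime_factorization (card K))"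

definition rainbow :: "(nat \<times> nat) set \<Rightarrow> bool" where
  "rainbow R \<longleftrightarrow> (\<exists>(k::nat) (a::nat \<Rightarrow> nat) b.
      R = (\<lambda>i. (a i, b i)) ` {0..k} \<and>
      (\<forall>i j. i < j \<and> j \<le> k \<longrightarrow> a i < a j \<and> a j < b j \<and> b j < b i))"

definition partial_rainbow :: "('a, 'b) monoid_scheme \<Rightarrow> ('a set \<times> 'a set) set \<Rightarrow> bool" where
  "partial_rainbow G S \<longleftrightarrow>
     (\<forall>a\<in>S. is_arrow G a \<and> fst a \<noteq> snd a) \<and>
     rainbow ((\<lambda>(K, H). (Pexp K, Pexp H)) ` S) \<and>
     (\<forall>g\<in>carrier G. \<forall>(K, H)\<in>S.
        (conjg G g K, conjg G g H) \<noteq> (K, H) \<longrightarrow> (conjg G g K, conjg G g H) \<notin> S)"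

end

theory Submission
  imports Defs "HOL-Algebra.Coset"
begin

lemma (in group) inv_m_cancel_aux:
  "g \<in> carrier G \<Longrightarrow> x \<in> carrier G \<Longrightarrow> inv g \<otimes> (g \<otimes> x) = x"
  by (metis l_inv l_one m_assoc inv_closed)

lemma (in group) conj_cancel_aux:
  assumes "g \<in> carrier G" "x \<in> carrier G" "y \<in> carrier G" "g \<otimes> x \<otimes> inv g = g \<otimes> y \<otimes> inv g"
  shows "x = y"
proof -
  have a: "inv g \<otimes> (g \<otimes> z \<otimes> inv g) \<otimes> g = z" if "z \<in> carrier G" for z
  proof -
    have "inv g \<otimes> (g \<otimes> z \<otimes> inv g) = z \<otimes> inv g"
      using that assms(1) by (metis inv_m_cancel_aux m_assoc m_closed inv_closed)
    then show ?thesis using that assms(1) by (metis l_inv r_one m_assoc inv_closed)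
  qed
  show ?thesis using a[of x] a[of y] assms by metis
qed

lemma conjg_subset:
  fixes G (structure)
  assumes "group G" "g \<in> carrier G" "X \<subseteq> carrier G"
  shows "conjg G g X \<subseteq> carrier G"
proof -
  interpret group G by fact
  show ?thesis using assms unfolding conjg_def by auto
qed

lemma conjg_mono: "X \<subseteq> Y \<Longrightarrow> conjg G g X \<subseteq> conjg G g Y"
  unfolding conjg_def by auto

lemma conjg_comp:
  fixes G (structure)
  assumes "group G" "g \<in> carrier G" "h \<in> carrier G" "X \<subseteq> carrier G"
  shows "conjg G h (conjg G g X) = conjg G (h \<otimes>\<^bsub>G\<^esub> g) X"
proof -
  interpret group G by fact
  have e: "h \<otimes> (g \<otimes> k \<otimes> inv g) \<otimes> inv h = (h \<otimes> g) \<otimes> k \<otimes> inv (h \<otimes> g)"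
    if "k \<in> carrier G" for k
    using that assms by (simp add: inv_mult_group m_assoc)
  show ?thesis
  proof
    show "conjg G h (conjg G g X) \<subseteq> conjg G (h \<otimes> g) X"
    proof
      fix y assume "y \<in> conjg G h (conjg G g X)"
      then obtain k where k: "k \<in> X" "y = h \<otimes> (g \<otimes> k \<otimes> inv g) \<otimes> inv h"
        unfolding conjg_def by blast
      have "k \<in> carrier G" using k(1) assms(4) by auto
      then have "y = (h \<otimes> g) \<otimes> k \<otimes> inv (h \<otimes> g)" using e[of k] k(2) by simp
      then show "y \<in> conjg G (h \<otimes> g) X" using k(1) unfolding conjg_def by blast
    qed
  next
    show "conjg G (h \<otimes> g) X \<subseteq> conjg G h (conjg G g X)"
    proof
      fix y assume "y \<in> conjg G (h \<otimes> g) X"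
      then obtain k where k: "k \<in> X" "y = (h \<otimes> g) \<otimes> k \<otimes> inv (h \<otimes> g)"
        unfolding conjg_def by blast
      have "k \<in> carrier G" using k(1) assms(4) by auto
      then have "y = h \<otimes> (g \<otimes> k \<otimes> inv g) \<otimes> inv h" using e[of k] k(2) by simp
      moreover have "g \<otimes> k \<otimes> inv g \<in> conjg G g X" using k(1) unfolding conjg_def by blast
      ultimately show "y \<in> conjg G h (conjg G g X)" unfolding conjg_def by blast
    qed
  qed
qed

lemma conjg_one:
  fixes G (structure)
  assumes "group G" "X \<subseteq> carrier G"
  shows "conjg G \<one>\<^bsub>G\<^esub> X = X"
proof -
  interpret group G by fact
  show ?thesis unfolding conjg_def using assms(2) by force
qed

lemma conjg_inv:
  fixes G (structure)
  assumes "group G" "g \<in> carrier G" "X \<subseteq> carrier G"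
  shows "conjg G (inv\<^bsub>G\<^esub> g) (conjg G g X) = X"
proof -
  interpret group G by fact
  show ?thesis using conjg_comp[OF assms(1) assms(2) inv_closed[OF assms(2)] assms(3)]
      conjg_one[OF assms(1,3)] assms by simp
qed

lemma conjg_card:
  fixes G (structure)
  assumes "group G" "g \<in> carrier G" "X \<subseteq> carrier G"
  shows "card (conjg G g X) = card X"
proof -
  interpret group G by fact
  have "conjg G g X = (\<lambda>k. g \<otimes> k \<otimes> inv g) ` X" unfolding conjg_def by auto
  moreover have "inj_on (\<lambda>k. g \<otimes> k \<otimes> inv g) X"
    unfolding inj_on_def
  proof (intro ballI impI)
    fix x y assume "x \<in> X" "y \<in> X" "g \<otimes> x \<otimes> inv g = g \<otimes> y \<otimes> inv g"
    then show "x = y" using conj_cancel_aux[of g x y] assms(2,3) by blast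
  qed
  ultimately show ?thesis by (simp add: card_image)
qed

lemma conjg_subgroup:
  fixes G (structure)
  assumes "group G" "g \<in> carrier G" "subgroup X G"
  shows "subgroup (conjg G g X) G"
proof -
  interpret group G by fact
  have sub: "X \<subseteq> carrier G" using assms(3) subgroup.subset by blast
  show ?thesis
  proof (rule subgroupI)
    show "conjg G g X \<subseteq> carrier G" using conjg_subset[OF assms(1,2) sub] .
    show "conjg G g X \<noteq> {}" unfolding conjg_def using subgroup.one_closed[OF assms(3)] by auto
  next
    fix a assume "a \<in> conjg G g X"
    then obtain k where k: "k \<in> X" "a = g \<otimes> k \<otimes> inv g" unfolding conjg_def by auto
    have kc: "k \<in> carrier G" using k sub by auto
    have "inv a = g \<otimes> inv k \<otimes> inv g"
      using k kc assms(2) by (simp add: inv_mult_group m_assoc)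
    moreover have "inv k \<in> X" using subgroup.m_inv_closed[OF assms(3) k(1)] .
    ultimately show "inv a \<in> conjg G g X" unfolding conjg_def by auto
  next
    fix a b assume "a \<in> conjg G g X" "b \<in> conjg G g X"
    then obtain k l where k: "k \<in> X" "a = g \<otimes> k \<otimes> inv g" and l: "l \<in> X" "b = g \<otimes> l \<otimes> inv g"
      unfolding conjg_def by auto
    have kc: "k \<in> carrier G" "l \<in> carrier G" using k l sub by auto
    have "a \<otimes> b = g \<otimes> (k \<otimes> l) \<otimes> inv g"
      using k l kc assms(2) by (simp add: m_assoc inv_m_cancel_aux)
    moreover have "k \<otimes> l \<in> X" using subgroup.m_closed[OF assms(3) k(1) l(1)] .
    ultimately show "a \<otimes> b \<in> conjg G g X" unfolding conjg_def by auto
  qed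
qed

lemma subgroup_card_dvd:
  fixes G (structure)
  assumes "group G" "finite (carrier G)" "subgroup I G" "subgroup J G" "I \<subseteq> J"
  shows "card I dvd card J"
proof -
  interpret group G by fact
  have s: "subgroup I (G\<lparr>carrier := J\<rparr>)" using subgroup_incl assms by blast
  have g: "group (G\<lparr>carrier := J\<rparr>)" using subgroup_imp_group assms(4) by blast
  obtain c where "c * card I = card J" using group.lagrange[OF g s] unfolding order_def by auto
  then show ?thesis by (metis dvd_triv_right)
qed

lemma subgroup_card_pos:
  assumes "finite (carrier G)" "subgroup I G"
  shows "card I > 0"
proof -
  have "I \<subseteq> carrier G" using subgroup.subset[OF assms(2)] .
  then have "finite I" using assms(1) finite_subset by blast
  moreover have "I \<noteq> {}" using subgroup.one_closed[OF assms(2)] by auto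
  ultimately show ?thesis by (simp add: card_gt_0_iff)
qed

lemma Pexp_mono_dvd:
  assumes "(a::nat) dvd b" "b > 0"
  shows "size (prime_factorization a) \<le> size (prime_factorization b)"
proof -
  have "a > 0" using assms by (metis dvd_0_left_iff gr0I)
  then have "prime_factorization a \<subseteq># prime_factorization b"
    using assms prime_factorization_subset_iff_dvd by auto
  then show ?thesis by (simp add: size_mset_mono)
qed

lemma Pexp_eq_dvd:
  assumes "(a::nat) dvd b" "b > 0" "size (prime_factorization a) = size (prime_factorization b)"
  shows "a = b"
proof -
  have "a > 0" using assms by (metis dvd_0_left_iff gr0I)
  then have "prime_factorization a \<subseteq># prime_factorization b"
    using assms prime_factorization_subset_iff_dvd by auto
  then have "prime_factorization a = prime_factorization b"
    using assms(3) subset_mset.le_imp_less_or_eq mset_subset_size by fastforce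
  then show ?thesis using \<open>a > 0\<close> assms(2)
    by (metis prod_mset_prime_factorization_nat)
qed


definition inv_ts :: "('a, 'b) monoid_scheme \<Rightarrow> ('a set \<times> 'a set) set \<Rightarrow> ('a set \<times> 'a set) set" where
  "inv_ts G S' = {(A, B). is_arrow G (A, B) \<and> (A = B \<or> (\<exists>K' H' g. (K', H') \<in> S' \<and> g \<in> carrier G \<and>
      B \<subseteq> conjg G g H' \<and> A \<subseteq> conjg G g K'))}"

lemma inv_ts_ts:
  fixes G (structure)
  assumes grp: "group G" and arr: "\<forall>a\<in>S'. is_arrow G a"
  shows "transfer_system G (inv_ts G S')"
proof -
  interpret group G by fact
  have sub: "X \<subseteq> carrier G" if "subgroup X G" for X using that subgroup.subset by blast
  show ?thesis unfolding transfer_system_def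
  proof (intro conjI allI impI ballI)
    fix a assume "a \<in> inv_ts G S'" then show "is_arrow G a" unfolding inv_ts_def by auto
  next
    fix H assume "subgroup H G" then show "(H, H) \<in> inv_ts G S'" unfolding inv_ts_def is_arrow_def by auto
  next
    fix A B C assume h: "(A, B) \<in> inv_ts G S' \<and> (B, C) \<in> inv_ts G S'"
    then have ab: "is_arrow G (A, B)" "A = B \<or> (\<exists>K' H' g. (K', H') \<in> S' \<and> g \<in> carrier G \<and>
      B \<subseteq> conjg G g H' \<and> A \<subseteq> conjg G g K')"
      and bc: "is_arrow G (B, C)" "B = C \<or> (\<exists>K' H' g. (K', H') \<in> S' \<and> g \<in> carrier G \<and>
      C \<subseteq> conjg G g H' \<and> B \<subseteq> conjg G g K')"
      unfolding inv_ts_def by auto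
    have arAC: "is_arrow G (A, C)" using ab(1) bc(1) unfolding is_arrow_def by auto
    show "(A, C) \<in> inv_ts G S'"
    proof (cases "A = B")
      case True then show ?thesis using h by simp
    next
      case False
      show ?thesis
      proof (cases "B = C")
        case True then show ?thesis using h by simp
      next
        case False
        then obtain K' H' g where w: "(K', H') \<in> S'" "g \<in> carrier G" "C \<subseteq> conjg G g H'" "B \<subseteq> conjg G g K'"
          using bc(2) by blast
        have "A \<subseteq> B" using ab(1) unfolding is_arrow_def by auto
        then show ?thesis using arAC w unfolding inv_ts_def by blast
      qed
    qed
  next
    fix A B h assume hh: "(A, B) \<in> inv_ts G S' \<and> h \<in> carrier G"
    then have ab: "is_arrow G (A, B)" "A = B \<or> (\<exists>K' H' g. (K', H') \<in> S' \<and> g \<in> carrier G \<and>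
      B \<subseteq> conjg G g H' \<and> A \<subseteq> conjg G g K')" and hc: "h \<in> carrier G"
      unfolding inv_ts_def by auto
    have ar: "is_arrow G (conjg G h A, conjg G h B)"
      using ab(1) conjg_subgroup[OF grp hc] conjg_mono[of A B G h] unfolding is_arrow_def by auto
    show "(conjg G h A, conjg G h B) \<in> inv_ts G S'"
    proof (cases "A = B")
      case True then show ?thesis using ar unfolding inv_ts_def by auto
    next
      case False
      then obtain K' H' g where w: "(K', H') \<in> S'" "g \<in> carrier G" "B \<subseteq> conjg G g H'" "A \<subseteq> conjg G g K'"
        using ab(2) by blast
      have s': "subgroup K' G" "subgroup H' G" using arr w(1) unfolding is_arrow_def by auto
      have "conjg G h B \<subseteq> conjg G (h \<otimes> g) H'"
        using conjg_mono[OF w(3), of G h] conjg_comp[OF grp w(2) hc sub[OF s'(2)]] by simp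
      moreover have "conjg G h A \<subseteq> conjg G (h \<otimes> g) K'"
        using conjg_mono[OF w(4), of G h] conjg_comp[OF grp w(2) hc sub[OF s'(1)]] by simp
      moreover have "h \<otimes> g \<in> carrier G" using hc w(2) by simp
      ultimately show ?thesis using ar w(1) unfolding inv_ts_def by blast
    qed
  next
    fix A B L assume hh: "(A, B) \<in> inv_ts G S' \<and> subgroup L G \<and> L \<subseteq> B"
    then have ab: "is_arrow G (A, B)" "A = B \<or> (\<exists>K' H' g. (K', H') \<in> S' \<and> g \<in> carrier G \<and>
      B \<subseteq> conjg G g H' \<and> A \<subseteq> conjg G g K')" and L: "subgroup L G" "L \<subseteq> B"
      unfolding inv_ts_def by auto
    have ar: "is_arrow G (A \<inter> L, L)"
      using ab(1) L subgroups_Inter_pair unfolding is_arrow_def by auto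
    show "(A \<inter> L, L) \<in> inv_ts G S'"
    proof (cases "A = B")
      case True then have "A \<inter> L = L" using L by auto
      then show ?thesis using ar unfolding inv_ts_def by auto
    next
      case False
      then obtain K' H' g where w: "(K', H') \<in> S'" "g \<in> carrier G" "B \<subseteq> conjg G g H'" "A \<subseteq> conjg G g K'"
        using ab(2) by blast
      then have "L \<subseteq> conjg G g H'" "A \<inter> L \<subseteq> conjg G g K'" using L by auto
      then show ?thesis using ar w(1,2) unfolding inv_ts_def by blast
    qed
  qed
qed

lemma S_in_inv_ts:
  fixes G (structure)
  assumes grp: "group G" and arr: "\<forall>a\<in>S'. is_arrow G a"
  shows "S' \<subseteq> inv_ts G S'"
proof
  fix a assume a: "a \<in> S'"
  obtain K H where kh: "a = (K, H)" by fastforce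
  have ar: "is_arrow G (K, H)" using arr a kh by auto
  then have "K \<subseteq> carrier G" "H \<subseteq> carrier G" unfolding is_arrow_def using subgroup.subset by auto
  then have "conjg G \<one> K = K" "conjg G \<one> H = H" using conjg_one[OF grp] by auto
  moreover have "\<one> \<in> carrier G" using grp by (simp add: group.is_monoid monoid.one_closed)
  ultimately have "\<exists>K' H' g. (K', H') \<in> S' \<and> g \<in> carrier G \<and> H \<subseteq> conjg G g H' \<and> K \<subseteq> conjg G g K'"
    using a kh by (intro exI[of _ K] exI[of _ H] exI[of _ "\<one>"]) simp
  then have "(K, H) \<in> inv_ts G S'" using ar unfolding inv_ts_def by simp
  then show "a \<in> inv_ts G S'" using kh by simp
qed

lemma gen_sub: "transfer_system G T \<Longrightarrow> S \<subseteq> T \<Longrightarrow> generated_ts G S \<subseteq> T"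
  unfolding generated_ts_def by auto

lemma S_sub_gen: "S \<subseteq> generated_ts G S"
  unfolding generated_ts_def by auto

lemma rainbow_le:
  assumes "rainbow R" "(a, b) \<in> R" "(a', b') \<in> R" "a \<le> a'" "b \<le> b'"
  shows "a = a' \<and> b = b'"
proof -
  obtain k :: nat and f g where Rm: "R = (\<lambda>i. (f i, g i)) ` {0..k} \<and>
      (\<forall>i j. i < j \<and> j \<le> k \<longrightarrow> f i < f j \<and> f j < g j \<and> g j < g i)"
    using assms(1) unfolding rainbow_def by (elim exE) (rule that, assumption)
  note R = conjunct1[OF Rm] and m = conjunct2[OF Rm]
  obtain i where i: "i \<le> k" "a = f i" "b = g i" using assms(2) unfolding R by auto
  obtain j where j: "j \<le> k" "a' = f j" "b' = g j" using assms(3) unfolding R by auto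
  show ?thesis
  proof (cases i j rule: linorder_cases)
    case less
    then have "g j < g i" using m j(1) by blast
    then show ?thesis using i j assms(5) by simp
  next
    case equal then show ?thesis using i j by simp
  next
    case greater
    then have "f j < f i" using m i(1) by blast
    then show ?thesis using i j assms(4) by simp
  qed
qed

lemma Pexp_le_sub:
  fixes G (structure)
  assumes "group G" "finite (carrier G)" "subgroup X G" "subgroup Y G" "X \<subseteq> Y"
  shows "Pexp X \<le> Pexp Y"
  unfolding Pexp_def
  using Pexp_mono_dvd[OF subgroup_card_dvd[OF assms] subgroup_card_pos[OF assms(2,4)]] .

lemma eq_sub:
  fixes G (structure)
  assumes "group G" "finite (carrier G)" "subgroup X G" "subgroup Y G" "X \<subseteq> Y" "Pexp X = Pexp Y"
  shows "X = Y"
proof -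
  have "card X = card Y"
    using Pexp_eq_dvd[OF subgroup_card_dvd[OF assms(1-5)] subgroup_card_pos[OF assms(2,4)]] assms(6)
    unfolding Pexp_def by blast
  moreover have "finite Y" using assms(2) subgroup.subset[OF assms(4)] finite_subset by blast
  ultimately show ?thesis using assms(5) card_subset_eq by blast
qed

lemma main_step:
  fixes G (structure)
  assumes grp: "group G" and fin: "finite (carrier G)"
    and S: "partial_rainbow G S" and S': "partial_rainbow G S'"
    and eq: "generated_ts G S = generated_ts G S'"
    and KH: "(K, H) \<in> S"
  shows "\<exists>g\<in>carrier G. (conjg G g K, conjg G g H) \<in> S'"
proof -
  interpret group G by fact
  have arrS: "\<forall>a\<in>S. is_arrow G a" and neS: "\<forall>a\<in>S. fst a \<noteq> snd a"
    using S unfolding partial_rainbow_def by auto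
  have arrS': "\<forall>a\<in>S'. is_arrow G a" and neS': "\<forall>a\<in>S'. fst a \<noteq> snd a"
    using S' unfolding partial_rainbow_def by auto
  have rb: "rainbow ((\<lambda>(K, H). (Pexp K, Pexp H)) ` S)" using S unfolding partial_rainbow_def by auto
  have sub: "X \<subseteq> carrier G" if "subgroup X G" for X using that subgroup.subset by blast
  have in1: "(K, H) \<in> inv_ts G S'"
    using KH S_sub_gen[of S G] eq gen_sub[OF inv_ts_ts[OF grp arrS'] S_in_inv_ts[OF grp arrS']] by blast
  have "K \<noteq> H" using neS KH by auto
  then obtain K' H' g where w: "(K', H') \<in> S'" "g \<in> carrier G" "H \<subseteq> conjg G g H'" "K \<subseteq> conjg G g K'"
    using in1 unfolding inv_ts_def by auto
  have in2: "(K', H') \<in> inv_ts G S"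
    using w(1) S_sub_gen[of S' G] eq gen_sub[OF inv_ts_ts[OF grp arrS] S_in_inv_ts[OF grp arrS]] by blast
  have "K' \<noteq> H'" using neS' w(1) by auto
  then obtain K'' H'' h where w2: "(K'', H'') \<in> S" "h \<in> carrier G" "H' \<subseteq> conjg G h H''" "K' \<subseteq> conjg G h K''"
    using in2 unfolding inv_ts_def by auto
  have sKH: "subgroup K G" "subgroup H G" using arrS KH unfolding is_arrow_def by auto
  have sKH': "subgroup K' G" "subgroup H' G" using arrS' w(1) unfolding is_arrow_def by auto
  have sKH'': "subgroup K'' G" "subgroup H'' G" using arrS w2(1) unfolding is_arrow_def by auto
  have Pc: "Pexp (conjg G x X) = Pexp X" if "x \<in> carrier G" "subgroup X G" for x X
    unfolding Pexp_def using conjg_card[OF grp that(1) sub[OF that(2)]] by simp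
  have cs: "subgroup (conjg G x X) G" if "x \<in> carrier G" "subgroup X G" for x X
    using conjg_subgroup[OF grp that] .
  have p1: "Pexp H \<le> Pexp H'" using Pexp_le_sub[OF grp fin sKH(2) cs[OF w(2) sKH'(2)] w(3)] Pc[OF w(2) sKH'(2)] by simp
  have p2: "Pexp H' \<le> Pexp H''" using Pexp_le_sub[OF grp fin sKH'(2) cs[OF w2(2) sKH''(2)] w2(3)] Pc[OF w2(2) sKH''(2)] by simp
  have q1: "Pexp K \<le> Pexp K'" using Pexp_le_sub[OF grp fin sKH(1) cs[OF w(2) sKH'(1)] w(4)] Pc[OF w(2) sKH'(1)] by simp
  have q2: "Pexp K' \<le> Pexp K''" using Pexp_le_sub[OF grp fin sKH'(1) cs[OF w2(2) sKH''(1)] w2(4)] Pc[OF w2(2) sKH''(1)] by simp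
  have "Pexp K = Pexp K'' \<and> Pexp H = Pexp H''"
    using rainbow_le[OF rb, of "Pexp K" "Pexp H" "Pexp K''" "Pexp H''"] KH w2(1) p1 p2 q1 q2 by force
  then have e1: "Pexp H = Pexp (conjg G g H')" and e2: "Pexp K = Pexp (conjg G g K')"
    using p1 p2 q1 q2 Pc[OF w(2) sKH'(2)] Pc[OF w(2) sKH'(1)] by auto
  have H: "H = conjg G g H'" using eq_sub[OF grp fin sKH(2) cs[OF w(2) sKH'(2)] w(3) e1] .
  have K: "K = conjg G g K'" using eq_sub[OF grp fin sKH(1) cs[OF w(2) sKH'(1)] w(4) e2] .
  have "conjg G (inv g) K = K'" "conjg G (inv g) H = H'"
    using H K conjg_inv[OF grp w(2)] sub sKH' by auto
  then show ?thesis using w(1) w(2) by (intro bexI[of _ "inv g"]) auto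
qed

theorem proposition3p4:
  fixes G :: "('a, 'b) monoid_scheme"
    and S S' :: "('a set \<times> 'a set) set"
  assumes "group G" and "finite (carrier G)"
    and "partial_rainbow G S" and "partial_rainbow G S'"
    and "generated_ts G S = generated_ts G S'"
  shows "\<forall>(K, H)\<in>S. \<exists>g\<in>carrier G. (conjg G g K, conjg G g H) \<in> S'"
  using main_step[OF assms] by blast

end
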